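(* Let $D$ be a strongly connected oriented graph such that for every vertex $x$, $x^+$ induces a transitive tournament. Then the inclusion-wise maximal hubs of $D$ form a partition of $V(D)$. Moreover, for any two distinct maximal hubs $H_1,H_2$, exactly one of the following holds: (i) there is no arc between $H_1$ and $H_2$; (ii) there is a nonempty set $S\subseteq H_2$ inducing a transitive tournament such that the arcs between $H_1$ and $H_2$ are exactly all arcs $hs$ with $h\in H_1$, $s\in S$; (iii) the same as (ii) with the roles of $H_1$ and $H_2$ exchanged.
   Context: Digraphs are finite, no loops, no parallel arcs; an oriented graph has no digon. $x^+$, $x^-$ denote out- and in-neighbourhoods. A hub of $D$ is a set $H\subseteq V(D)$ such that $D[H]$ is strongly connected and there exists a vertex $x\notin H$ with $H\subseteq x^-$. (Every single vertex forms a hub, since $D$ is strong.) *)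

theory Defs
  imports Main
begin

definition digraph :: "'a set \<Rightarrow> ('a \<times> 'a) set \<Rightarrow> bool" where
  "digraph V A \<longleftrightarrow> finite V \<and> A \<subseteq> V \<times> V \<and> (\<forall>x. (x, x) \<notin> A)"

definition oriented :: "'a set \<Rightarrow> ('a \<times> 'a) set \<Rightarrow> bool" where
  "oriented V A \<longleftrightarrow> digraph V A \<and> (\<forall>x y. (x, y) \<in> A \<longrightarrow> (y, x) \<notin> A)"

definition outnbhd :: "('a \<times> 'a) set \<Rightarrow> 'a \<Rightarrow> 'a set" where
  "outnbhd A x = {y. (x, y) \<in> A}"

definition innbhd :: "('a \<times> 'a) set \<Rightarrow> 'a \<Rightarrow> 'a set" where
  "innbhd A x = {y. (y, x) \<in> A}"

definition induced_arcs :: "('a \<times> 'a) set \<Rightarrow> 'a set \<Rightarrow> ('a \<times> 'a) set" where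
  "induced_arcs A H = A \<inter> (H \<times> H)"

definition strong_induced :: "('a \<times> 'a) set \<Rightarrow> 'a set \<Rightarrow> bool" where
  "strong_induced A H \<longleftrightarrow> H \<noteq> {} \<and> (\<forall>x\<in>H. \<forall>y\<in>H. (x, y) \<in> (induced_arcs A H)\<^sup>*)"

definition transitive_tournament :: "('a \<times> 'a) set \<Rightarrow> 'a set \<Rightarrow> bool" where
  "transitive_tournament A S \<longleftrightarrow>
     (\<forall>u\<in>S. \<forall>v\<in>S. u \<noteq> v \<longrightarrow> (u, v) \<in> A \<or> (v, u) \<in> A) \<and>
     (\<forall>u\<in>S. \<forall>v\<in>S. (u, v) \<in> A \<longrightarrow> (v, u) \<notin> A) \<and>
     (\<forall>u\<in>S. \<forall>v\<in>S. \<forall>w\<in>S. (u, v) \<in> A \<and> (v, w) \<in> A \<longrightarrow> (u, w) \<in> A)"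

definition hub :: "'a set \<Rightarrow> ('a \<times> 'a) set \<Rightarrow> 'a set \<Rightarrow> bool" where
  "hub V A H \<longleftrightarrow> H \<subseteq> V \<and> strong_induced A H \<and> (\<exists>x\<in>V. x \<notin> H \<and> H \<subseteq> innbhd A x)"

definition maximal_hub :: "'a set \<Rightarrow> ('a \<times> 'a) set \<Rightarrow> 'a set \<Rightarrow> bool" where
  "maximal_hub V A H \<longleftrightarrow> hub V A H \<and> (\<forall>H'. hub V A H' \<and> H \<subseteq> H' \<longrightarrow> H' = H)"

definition arcs_between :: "('a \<times> 'a) set \<Rightarrow> 'a set \<Rightarrow> 'a set \<Rightarrow> ('a \<times> 'a) set" where
  "arcs_between A X Y = {(u, v) \<in> A. (u \<in> X \<and> v \<in> Y) \<or> (u \<in> Y \<and> v \<in> X)}"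

end

theory Submission
  imports Defs
begin

lemma tt_trans: "transitive_tournament A S \<Longrightarrow> u \<in> S \<Longrightarrow> v \<in> S \<Longrightarrow> w \<in> S
  \<Longrightarrow> (u,v) \<in> A \<Longrightarrow> (v,w) \<in> A \<Longrightarrow> (u,w) \<in> A"
  unfolding transitive_tournament_def by blast

lemma tt_adj: "transitive_tournament A S \<Longrightarrow> u \<in> S \<Longrightarrow> v \<in> S \<Longrightarrow> u \<noteq> v
  \<Longrightarrow> (u,v) \<in> A \<or> (v,u) \<in> A"
  unfolding transitive_tournament_def by blast

lemma tt_subset: "transitive_tournament A S \<Longrightarrow> S' \<subseteq> S \<Longrightarrow> transitive_tournament A S'"
  unfolding transitive_tournament_def by blast

lemma reach_mono: "(x,y) \<in> (induced_arcs A H)\<^sup>* \<Longrightarrow> H \<subseteq> H' \<Longrightarrow> (x,y) \<in> (induced_arcs A H')\<^sup>*"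
proof -
  assume "(x,y) \<in> (induced_arcs A H)\<^sup>*" "H \<subseteq> H'"
  moreover have "induced_arcs A H \<subseteq> induced_arcs A H'" using \<open>H \<subseteq> H'\<close>
    unfolding induced_arcs_def by blast
  ultimately show ?thesis using rtrancl_mono by blast
qed

lemma propagate:
  assumes "strong_induced A H" "a \<in> H" "P a"
    "\<And>u w. u \<in> H \<Longrightarrow> w \<in> H \<Longrightarrow> (u,w) \<in> A \<Longrightarrow> P u \<Longrightarrow> P w"
  shows "\<forall>h\<in>H. P h"
proof
  fix h assume "h \<in> H"
  then have "(a,h) \<in> (induced_arcs A H)\<^sup>*" using assms(1,2) unfolding strong_induced_def by blast
  then show "P h"
  proof (induction rule: rtrancl_induct)
    case base then show ?case using assms(3) .
  next
    case (step y z) then show ?case using assms(4) unfolding induced_arcs_def by blast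
  qed
qed

lemma strong_union:
  assumes "strong_induced A H1" "strong_induced A H2" "v \<in> H1" "v \<in> H2"
  shows "strong_induced A (H1 \<union> H2)"
proof -
  have to: "(p, v) \<in> (induced_arcs A (H1 \<union> H2))\<^sup>*" if "p \<in> H1 \<union> H2" for p
    using that assms reach_mono[of p v A H1 "H1 \<union> H2"] reach_mono[of p v A H2 "H1 \<union> H2"]
    unfolding strong_induced_def by blast
  have fr: "(v, p) \<in> (induced_arcs A (H1 \<union> H2))\<^sup>*" if "p \<in> H1 \<union> H2" for p
    using that assms reach_mono[of v p A H1 "H1 \<union> H2"] reach_mono[of v p A H2 "H1 \<union> H2"]
    unfolding strong_induced_def by blast
  show ?thesis unfolding strong_induced_def using assms(3) rtrancl_trans[OF to fr] by blast
qed

lemma strong_extend: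
  assumes "strong_induced A H" "a \<in> H" "b \<in> H" "(a,y) \<in> A" "(y,b) \<in> A"
  shows "strong_induced A (insert y H)"
proof -
  let ?r = "induced_arcs A (insert y H)"
  have ay: "(a,y) \<in> ?r" and yb: "(y,b) \<in> ?r" using assms unfolding induced_arcs_def by auto
  have to: "(p, y) \<in> ?r\<^sup>*" if "p \<in> insert y H" for p
  proof (cases "p = y")
    case False
    then have "(p,a) \<in> ?r\<^sup>*" using that assms reach_mono[of p a A H "insert y H"]
      unfolding strong_induced_def by blast
    then show ?thesis using ay by (meson rtrancl.rtrancl_into_rtrancl)
  qed simp
  have fr: "(y, p) \<in> ?r\<^sup>*" if "p \<in> insert y H" for p
  proof (cases "p = y")
    case False
    then have "(b,p) \<in> ?r\<^sup>*" using that assms reach_mono[of b p A H "insert y H"]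
      unfolding strong_induced_def by blast
    then show ?thesis using yb by (meson converse_rtrancl_into_rtrancl)
  qed simp
  show ?thesis unfolding strong_induced_def using rtrancl_trans[OF to fr] by blast
qed

lemma union_hub_dir:
  assumes or: "oriented V A" and tt: "\<forall>x\<in>V. transitive_tournament A (outnbhd A x)"
    and h1: "hub V A H1" and h2: "hub V A H2" and v: "v \<in> H1" "v \<in> H2"
    and x1: "x1 \<in> V" "x1 \<notin> H1" "H1 \<subseteq> innbhd A x1"
    and x2: "x2 \<in> V" "x2 \<notin> H2" "H2 \<subseteq> innbhd A x2"
    and x12: "(x1,x2) \<in> A"
  shows "hub V A (H1 \<union> H2)"
proof -
  have A: "A \<subseteq> V \<times> V" "\<And>p q. (p,q) \<in> A \<Longrightarrow> (q,p) \<notin> A" using or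
    unfolding oriented_def digraph_def by auto
  have sH1: "strong_induced A H1" and sH2: "strong_induced A H2" and sub: "H1 \<subseteq> V" "H2 \<subseteq> V"
    using h1 h2 unfolding hub_def by auto
  have all: "\<forall>h\<in>H1. (h,x2) \<in> A"
  proof (rule propagate[OF sH1 v(1)])
    show "(v,x2) \<in> A" using v x2 unfolding innbhd_def by auto
  next
    fix u w assume u: "u \<in> H1" and w: "w \<in> H1" and uw: "(u,w) \<in> A" and ux2: "(u,x2) \<in> A"
    have ux1: "(u,x1) \<in> A" and wx1: "(w,x1) \<in> A" using u w x1 unfolding innbhd_def by auto
    have "u \<in> V" using u sub by auto
    then have T: "transitive_tournament A (outnbhd A u)" using tt by auto
    show "(w,x2) \<in> A" using tt_trans[OF T, of w x1 x2] uw ux1 ux2 wx1 x12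
      unfolding outnbhd_def by auto
  qed
  have "x2 \<notin> H1"
  proof
    assume "x2 \<in> H1" then have "(x2,x1) \<in> A" using x1 unfolding innbhd_def by auto
    then show False using A(2) x12 by blast
  qed
  then show ?thesis unfolding hub_def using strong_union[OF sH1 sH2 v] sub x2 all
    unfolding innbhd_def by auto
qed

lemma union_hub:
  assumes or: "oriented V A" and tt: "\<forall>x\<in>V. transitive_tournament A (outnbhd A x)"
    and h1: "hub V A H1" and h2: "hub V A H2" and v: "v \<in> H1" "v \<in> H2"
  shows "hub V A (H1 \<union> H2)"
proof -
  obtain x1 where x1: "x1 \<in> V" "x1 \<notin> H1" "H1 \<subseteq> innbhd A x1" using h1 unfolding hub_def by blast
  obtain x2 where x2: "x2 \<in> V" "x2 \<notin> H2" "H2 \<subseteq> innbhd A x2" using h2 unfolding hub_def by blast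
  have vV: "v \<in> V" using v h1 unfolding hub_def by auto
  have o: "x1 \<in> outnbhd A v" "x2 \<in> outnbhd A v" using v x1 x2 unfolding innbhd_def outnbhd_def by auto
  show ?thesis
  proof (cases "x1 = x2")
    case True
    then show ?thesis using h1 h2 x1 x2 strong_union[of A H1 H2 v] v unfolding hub_def by auto
  next
    case False
    then have "(x1,x2) \<in> A \<or> (x2,x1) \<in> A" using tt_adj[of A "outnbhd A v"] tt vV o by blast
    then show ?thesis
    proof
      assume "(x1,x2) \<in> A" then show ?thesis using union_hub_dir[OF or tt h1 h2 v x1 x2] by blast
    next
      assume "(x2,x1) \<in> A" then show ?thesis using union_hub_dir[OF or tt h2 h1 v(2) v(1) x2 x1]
        by (simp add: Un_commute)
    qed
  qed
qed

lemma absorb: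
  assumes or: "oriented V A" and tt: "\<forall>x\<in>V. transitive_tournament A (outnbhd A x)"
    and mh: "maximal_hub V A H" and y: "y \<in> V" "y \<notin> H" and a: "a \<in> H" "(a,y) \<in> A"
  shows "\<forall>h\<in>H. (h,y) \<in> A"
proof -
  have A: "A \<subseteq> V \<times> V" "\<And>p q. (p,q) \<in> A \<Longrightarrow> (q,p) \<notin> A" using or
    unfolding oriented_def digraph_def by auto
  have h: "hub V A H" using mh unfolding maximal_hub_def by auto
  then have sH: "strong_induced A H" and sub: "H \<subseteq> V" unfolding hub_def by auto
  obtain x where x: "x \<in> V" "x \<notin> H" "H \<subseteq> innbhd A x" using h unfolding hub_def by blast
  show ?thesis
  proof (rule propagate[where P="\<lambda>h. (h,y) \<in> A", OF sH a(1) a(2)])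
    fix u w assume u: "u \<in> H" and w: "w \<in> H" and uw: "(u,w) \<in> A" and uy: "(u,y) \<in> A"
    have ux: "(u,x) \<in> A" and wx: "(w,x) \<in> A" using u w x unfolding innbhd_def by auto
    have "u \<in> V" using u sub by auto
    then have T: "transitive_tournament A (outnbhd A u)" using tt by auto
    show "(w,y) \<in> A"
    proof (cases "y = x")
      case True then show ?thesis using wx by simp
    next
      case False
      have "w \<noteq> y" using w y by auto
      then have wy: "(w,y) \<in> A \<or> (y,w) \<in> A" using tt_adj[OF T, of w y] uw uy unfolding outnbhd_def by auto
      have xy: "(x,y) \<in> A \<or> (y,x) \<in> A" using tt_adj[OF T, of x y] False ux uy unfolding outnbhd_def by auto
      show ?thesis
      proof (rule ccontr)
        assume nwy: "(w,y) \<notin> A"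
        with wy have yw: "(y,w) \<in> A" by auto
        from xy show False
        proof
          assume "(x,y) \<in> A"
          then have "(w,y) \<in> A" using tt_trans[OF T, of w x y] uw ux uy wx unfolding outnbhd_def by auto
          then show False using nwy by simp
        next
          assume yx: "(y,x) \<in> A"
          have "hub V A (insert y H)" unfolding hub_def
            using strong_extend[OF sH u w uy yw] sub y x False yx unfolding innbhd_def by auto
          then have "insert y H = H" using mh unfolding maximal_hub_def by auto
          then show False using y by auto
        qed
      qed
    qed
  qed
qed

lemma singleton_hub:
  assumes or: "oriented V A" and c: "card V \<ge> 2" and s: "strong_induced A V" and v: "v \<in> V"
  shows "hub V A {v}"
proof -
  have A: "A \<subseteq> V \<times> V" "\<And>p. (p,p) \<notin> A" using or unfolding oriented_def digraph_def by auto
  have "\<exists>w\<in>V. w \<noteq> v"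
  proof (rule ccontr)
    assume "\<not> ?thesis" then have "V \<subseteq> {v}" by auto
    then have "card V \<le> card {v}" using card_mono[of "{v}" V] by simp
    then have "card V \<le> 1" by simp
    then show False using c by simp
  qed
  then obtain w where w: "w \<in> V" "w \<noteq> v" by blast
  then have "(v,w) \<in> (induced_arcs A V)\<^sup>*" using s v unfolding strong_induced_def by blast
  then obtain z where "(v,z) \<in> induced_arcs A V" using w(2) by (blast elim: converse_rtranclE)
  then have z: "(v,z) \<in> A" "z \<in> V" unfolding induced_arcs_def by auto
  have "z \<noteq> v" using z A(2) by auto
  moreover have "strong_induced A {v}" unfolding strong_induced_def by auto
  ultimately show ?thesis unfolding hub_def innbhd_def using z v by auto
qed

lemma exists_max:
  assumes "finite V" "hub V A H"
  shows "\<exists>M. maximal_hub V A M \<and> H \<subseteq> M"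
proof -
  let ?F = "{H'. hub V A H' \<and> H \<subseteq> H'}"
  have "?F \<subseteq> Pow V" unfolding hub_def by auto
  then have "finite ?F" using assms(1) by (meson finite_Pow_iff finite_subset)
  then obtain m where m: "m \<in> ?F" "\<forall>b\<in>?F. m \<le> b \<longrightarrow> m = b"
    using finite_has_maximal2[of ?F H] assms(2) by auto
  then have "maximal_hub V A m" unfolding maximal_hub_def by auto
  then show ?thesis using m by auto
qed

theorem claim2p5:
  fixes V :: "'a set" and A :: "('a \<times> 'a) set"
  assumes "oriented V A"
    and "card V \<ge> 2"
    and "strong_induced A V"
    and "\<forall>x\<in>V. transitive_tournament A (outnbhd A x)"
  shows "(\<forall>H. maximal_hub V A H \<longrightarrow> H \<noteq> {})
     \<and> (\<forall>H1 H2. maximal_hub V A H1 \<and> maximal_hub V A H2 \<and> H1 \<noteq> H2 \<longrightarrow> H1 \<inter> H2 = {})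
     \<and> \<Union>{H. maximal_hub V A H} = V
     \<and> (\<forall>H1 H2. maximal_hub V A H1 \<and> maximal_hub V A H2 \<and> H1 \<noteq> H2 \<longrightarrow>
          (let P1 = (arcs_between A H1 H2 = {});
               P2 = (\<exists>S. S \<noteq> {} \<and> S \<subseteq> H2 \<and> transitive_tournament A S \<and>
                         arcs_between A H1 H2 = H1 \<times> S);
               P3 = (\<exists>S. S \<noteq> {} \<and> S \<subseteq> H1 \<and> transitive_tournament A S \<and>
                         arcs_between A H1 H2 = H2 \<times> S)
           in (P1 \<or> P2 \<or> P3) \<and> \<not> (P1 \<and> P2) \<and> \<not> (P1 \<and> P3) \<and> \<not> (P2 \<and> P3)))"
proof -
  note or = assms(1) and tt = assms(4)
  have A: "A \<subseteq> V \<times> V" "\<And>p q. (p,q) \<in> A \<Longrightarrow> (q,p) \<notin> A" "finite V" using or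
    unfolding oriented_def digraph_def by auto
  have ne: "\<forall>H. maximal_hub V A H \<longrightarrow> H \<noteq> {}"
    unfolding maximal_hub_def hub_def strong_induced_def by auto
  have disj: "H1 \<inter> H2 = {}" if "maximal_hub V A H1" "maximal_hub V A H2" "H1 \<noteq> H2" for H1 H2
  proof (rule ccontr)
    assume "H1 \<inter> H2 \<noteq> {}"
    then obtain v where "v \<in> H1" "v \<in> H2" by auto
    then have "hub V A (H1 \<union> H2)" using union_hub[OF or tt] that unfolding maximal_hub_def by blast
    then have "H1 \<union> H2 = H1" "H1 \<union> H2 = H2" using that unfolding maximal_hub_def by auto
    then show False using that by auto
  qed
  have cover: "\<Union>{H. maximal_hub V A H} = V"
  proof
    show "\<Union>{H. maximal_hub V A H} \<subseteq> V" unfolding maximal_hub_def hub_def by auto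
  next
    show "V \<subseteq> \<Union>{H. maximal_hub V A H}"
    proof
      fix v assume "v \<in> V"
      then have "hub V A {v}" using singleton_hub[OF or assms(2,3)] by auto
      then obtain M where "maximal_hub V A M" "{v} \<subseteq> M" using exists_max[OF A(3)] by blast
      then show "v \<in> \<Union>{H. maximal_hub V A H}" by auto
    qed
  qed
  have dir: "\<exists>S. S \<noteq> {} \<and> S \<subseteq> H2 \<and> transitive_tournament A S \<and> arcs_between A H1 H2 = H1 \<times> S"
    if m1: "maximal_hub V A H1" and m2: "maximal_hub V A H2" and d: "H1 \<inter> H2 = {}"
      and a: "a \<in> H1" "s \<in> H2" "(a,s) \<in> A" for H1 H2 a s
  proof -
    have sub1: "H1 \<subseteq> V" and sub2: "H2 \<subseteq> V" using m1 m2 unfolding maximal_hub_def hub_def by auto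
    let ?S = "{t \<in> H2. \<exists>h\<in>H1. (h,t) \<in> A}"
    have all: "(h,t) \<in> A" if "h \<in> H1" "t \<in> ?S" for h t
    proof -
      from that obtain h' where "h' \<in> H1" "(h',t) \<in> A" by auto
      then show ?thesis using absorb[OF or tt m1, of t h'] that d sub2 by blast
    qed
    have noback: "(t,h) \<notin> A" if "t \<in> H2" "h \<in> H1" for t h
    proof
      assume th: "(t,h) \<in> A"
      have "\<forall>k\<in>H2. (k,h) \<in> A" using absorb[OF or tt m2, of h t] th that d sub1 by blast
      then have "(s,h) \<in> A" using a by auto
      moreover have "(h,s) \<in> A" using all[of h s] that a by auto
      ultimately show False using A(2) by blast
    qed
    have "?S \<subseteq> outnbhd A a" using all a unfolding outnbhd_def by auto
    then have "transitive_tournament A ?S" using tt_subset tt a sub1 by blast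
    moreover have "arcs_between A H1 H2 = H1 \<times> ?S"
      unfolding arcs_between_def using all noback by auto
    moreover have "?S \<noteq> {}" using a by auto
    ultimately show ?thesis by blast
  qed
  have part4: "let P1 = (arcs_between A H1 H2 = {});
               P2 = (\<exists>S. S \<noteq> {} \<and> S \<subseteq> H2 \<and> transitive_tournament A S \<and>
                         arcs_between A H1 H2 = H1 \<times> S);
               P3 = (\<exists>S. S \<noteq> {} \<and> S \<subseteq> H1 \<and> transitive_tournament A S \<and>
                         arcs_between A H1 H2 = H2 \<times> S)
           in (P1 \<or> P2 \<or> P3) \<and> \<not> (P1 \<and> P2) \<and> \<not> (P1 \<and> P3) \<and> \<not> (P2 \<and> P3)"
    if m1: "maximal_hub V A H1" and m2: "maximal_hub V A H2" and n: "H1 \<noteq> H2" for H1 H2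
  proof -
    have d: "H1 \<inter> H2 = {}" using disj m1 m2 n by auto
    have n1: "H1 \<noteq> {}" and n2: "H2 \<noteq> {}" using ne m1 m2 by auto
    have sym: "arcs_between A H2 H1 = arcs_between A H1 H2" unfolding arcs_between_def by auto
    define P1 where "P1 = (arcs_between A H1 H2 = {})"
    define P2 where "P2 = (\<exists>S. S \<noteq> {} \<and> S \<subseteq> H2 \<and> transitive_tournament A S \<and>
                         arcs_between A H1 H2 = H1 \<times> S)"
    define P3 where "P3 = (\<exists>S. S \<noteq> {} \<and> S \<subseteq> H1 \<and> transitive_tournament A S \<and>
                         arcs_between A H1 H2 = H2 \<times> S)"
    have "P1 \<or> P2 \<or> P3"
    proof (cases "arcs_between A H1 H2 = {}")
      case True then show ?thesis unfolding P1_def by auto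
    next
      case False
      then obtain u w where uw: "(u,w) \<in> A" "(u \<in> H1 \<and> w \<in> H2) \<or> (u \<in> H2 \<and> w \<in> H1)"
        unfolding arcs_between_def by auto
      from uw(2) show ?thesis
      proof
        assume "u \<in> H1 \<and> w \<in> H2"
        then show ?thesis using dir[OF m1 m2 d, of u w] uw unfolding P2_def by blast
      next
        assume "u \<in> H2 \<and> w \<in> H1"
        then show ?thesis using dir[OF m2 m1 _ , of u w] uw d sym unfolding P3_def
          by (metis inf_commute)
      qed
    qed
    moreover have "\<not> (P1 \<and> P2)" unfolding P1_def P2_def using n1 by auto
    moreover have "\<not> (P1 \<and> P3)" unfolding P1_def P3_def using n2 by auto
    moreover have "\<not> (P2 \<and> P3)"
    proof
      assume "P2 \<and> P3"
      then obtain S S' where "S \<noteq> {}" "S' \<noteq> {}" "S \<subseteq> H2" "S' \<subseteq> H1"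
        "arcs_between A H1 H2 = H1 \<times> S" "arcs_between A H1 H2 = H2 \<times> S'" unfolding P2_def P3_def by blast
      then have "H1 \<times> S = H2 \<times> S'" by simp
      moreover have "S \<noteq> {}" by fact
      ultimately obtain h s where "h \<in> H1" "s \<in> S" using n1 by blast
      then have "(h,s) \<in> H2 \<times> S'" using \<open>H1 \<times> S = H2 \<times> S'\<close> by blast
      then show False using \<open>h \<in> H1\<close> d by auto
    qed
    ultimately show ?thesis unfolding Let_def P1_def P2_def P3_def by blast
  qed
  show ?thesis using ne disj cover part4 by blast
qed

end
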